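(* Let $K:\ell^2\to\mathcal{H}$ be a bounded, linear and injective operator into a real Hilbert space $\mathcal{H}$, $f\in\mathcal{H}$, $w=(w_k)$ with $w_k\ge w_0>0$, $\gamma>0$, and let $\bar u$ be the unique minimizer of $\Psi(u)=\frac12\|Ku-f\|_{\mathcal{H}}^2+\sum_k w_k|u_k|$ over $\ell^2$. For $u\in\ell^2$ let $\mathcal{A}(u)=\{k: |u-\gamma K^*(Ku-f)|_k>\gamma w_k\}$ and $\mathcal{G}(u)=(I-P_{\mathcal{A}(u)})+\gamma P_{\mathcal{A}(u)}K^*K$. Let $k_0\in\mathbb{N}$ and $\rho>0$ be such that $\|u-\bar u\|<\rho$ implies $\mathcal{A}(u)\subset\{1,\dots,k_0\}$. Then $\mathcal{G}(u)^{-1}$ is uniformly bounded on the ball $B_\rho(\bar u)=\{u\in\ell^2:\|u-\bar u\|<\rho\}$, i.e. $\sup_{u\in B_\rho(\bar u)}\|\mathcal{G}(u)^{-1}\|<\infty$.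
   Context: $K^*$ is the Hilbert space adjoint of $K$; $|x|_k$ means $|x_k|$; $P_{\mathcal{B}}$ is the coordinate projection onto the indices in $\mathcal{B}\subset\mathbb{N}$. Each $\mathcal{G}(u)$ is invertible on $\ell^2$. *)

theory Defs
  imports "HOL-Analysis.Analysis"
begin

definition l2 :: "(nat \<Rightarrow> real) set" where
  "l2 = {u. summable (\<lambda>k. (u k)\<^sup>2)}"

definition l2norm :: "(nat \<Rightarrow> real) \<Rightarrow> real" where
  "l2norm u = sqrt (\<Sum>k. (u k)\<^sup>2)"

definition unitvec :: "nat \<Rightarrow> nat \<Rightarrow> real" where
  "unitvec k = (\<lambda>j. if j = k then 1 else 0)"

definition bounded_linear_l2 :: "((nat \<Rightarrow> real) \<Rightarrow> 'h::real_normed_vector) \<Rightarrow> bool" where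
  "bounded_linear_l2 K \<longleftrightarrow>
     (\<forall>u\<in>l2. \<forall>v\<in>l2. K (\<lambda>k. u k + v k) = K u + K v) \<and>
     (\<forall>u\<in>l2. \<forall>c. K (\<lambda>k. c * u k) = c *\<^sub>R K u) \<and>
     (\<exists>C. \<forall>u\<in>l2. norm (K u) \<le> C * l2norm u)"

text \<open>Hilbert space adjoint: the k-th coordinate of K* h is the inner product of K e_k with h.\<close>
definition Kadj :: "((nat \<Rightarrow> real) \<Rightarrow> 'h::real_inner) \<Rightarrow> 'h \<Rightarrow> nat \<Rightarrow> real" where
  "Kadj K h = (\<lambda>k. inner (K (unitvec k)) h)"

definition Psi :: "((nat \<Rightarrow> real) \<Rightarrow> 'h::real_inner) \<Rightarrow> 'h \<Rightarrow> (nat \<Rightarrow> real)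
                   \<Rightarrow> (nat \<Rightarrow> real) \<Rightarrow> ereal" where
  "Psi K f w u = ereal ((norm (K u - f))\<^sup>2 / 2) + (\<Sum>k. ereal (w k * \<bar>u k\<bar>))"

definition activeset :: "((nat \<Rightarrow> real) \<Rightarrow> 'h::real_inner) \<Rightarrow> 'h \<Rightarrow> (nat \<Rightarrow> real) \<Rightarrow> real
                         \<Rightarrow> (nat \<Rightarrow> real) \<Rightarrow> nat set" where
  "activeset K f w \<gamma> u = {k. \<bar>u k - \<gamma> * Kadj K (K u - f) k\<bar> > \<gamma> * w k}"

definition Gop :: "((nat \<Rightarrow> real) \<Rightarrow> 'h::real_inner) \<Rightarrow> 'h \<Rightarrow> (nat \<Rightarrow> real) \<Rightarrow> real
                   \<Rightarrow> (nat \<Rightarrow> real) \<Rightarrow> (nat \<Rightarrow> real) \<Rightarrow> (nat \<Rightarrow> real)" where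
  "Gop K f w \<gamma> u v = (\<lambda>k. if k \<in> activeset K f w \<gamma> u then \<gamma> * Kadj K (K v) k else v k)"

end

theory Submission
  imports Defs
begin


lemma l2_mod:
  assumes "u \<in> l2" "finite A" "\<And>k. k \<notin> A \<Longrightarrow> v k = u k"
  shows "v \<in> l2"
proof -
  have "summable (\<lambda>k. (v k)\<^sup>2 - (u k)\<^sup>2)"
    by (rule summable_finite[OF assms(2)]) (simp add: assms(3))
  from summable_add[OF this, of "\<lambda>k. (u k)\<^sup>2"] assms(1)
  show ?thesis by (simp add: l2_def)
qed

lemma l2_fin:
  assumes "finite A" "\<And>k. k \<notin> A \<Longrightarrow> v k = 0"
  shows "v \<in> l2"
  by (rule l2_mod[of "\<lambda>_. 0" A]) (auto simp: l2_def assms)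

lemma unitvec_l2: "unitvec j \<in> l2"
  by (rule l2_fin[of "{j}"]) (auto simp: unitvec_def)

lemma l2norm_nonneg: "u \<in> l2 \<Longrightarrow> 0 \<le> l2norm u"
  by (auto simp: l2norm_def l2_def intro!: suminf_nonneg)

lemma coord_le_l2norm:
  assumes "y \<in> l2" shows "\<bar>y k\<bar> \<le> l2norm y"
proof -
  have "(\<Sum>n\<in>{k}. (y n)\<^sup>2) \<le> (\<Sum>n. (y n)\<^sup>2)"
    using assms by (intro sum_le_suminf) (auto simp: l2_def)
  then show ?thesis unfolding l2norm_def
    by (intro real_le_rsqrt) (simp add: power2_abs)
qed

lemma zero_l2: "(\<lambda>_. 0) \<in> l2" by (simp add: l2_def)

context
  fixes K :: "(nat \<Rightarrow> real) \<Rightarrow> 'h::real_inner"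
  assumes K_bl: "bounded_linear_l2 K"
begin

lemma K_add: "u \<in> l2 \<Longrightarrow> v \<in> l2 \<Longrightarrow> K (\<lambda>k. u k + v k) = K u + K v"
  using K_bl by (simp add: bounded_linear_l2_def)

lemma K_scale: "u \<in> l2 \<Longrightarrow> K (\<lambda>k. c * u k) = c *\<^sub>R K u"
  using K_bl by (simp add: bounded_linear_l2_def)

lemma K_zero: "K (\<lambda>_. 0) = 0"
  using K_scale[OF zero_l2, of 0] by simp

lemma K_sum:
  assumes "finite A"
  shows "(\<forall>k. k \<notin> A \<longrightarrow> z k = 0) \<Longrightarrow> K z = (\<Sum>j\<in>A. z j *\<^sub>R K (unitvec j))"
  using assms
proof (induction A arbitrary: z rule: finite_induct)
  case empty
  then have "z = (\<lambda>_. 0)" by auto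
  then show ?case by (simp add: K_zero)
next
  case (insert a A)
  define z' where "z' = z(a := 0)"
  have z'A: "\<forall>k. k \<notin> A \<longrightarrow> z' k = 0" using insert.prems by (auto simp: z'_def)
  have z'l2: "z' \<in> l2" using z'A insert.hyps by (intro l2_fin[of A]) auto
  have ul2: "(\<lambda>k. z a * unitvec a k) \<in> l2"
    by (rule l2_fin[of "{a}"]) (auto simp: unitvec_def)
  have "z = (\<lambda>k. z' k + z a * unitvec a k)"
    by (auto simp: z'_def unitvec_def)
  then have "K z = K z' + K (\<lambda>k. z a * unitvec a k)"
    using K_add[OF z'l2 ul2] by simp
  also have "\<dots> = (\<Sum>j\<in>A. z' j *\<^sub>R K (unitvec j)) + z a *\<^sub>R K (unitvec a)"
    using insert.IH[OF z'A] K_scale[OF unitvec_l2] by simp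
  also have "(\<Sum>j\<in>A. z' j *\<^sub>R K (unitvec j)) = (\<Sum>j\<in>A. z j *\<^sub>R K (unitvec j))"
    using insert.hyps by (intro sum.cong) (auto simp: z'_def)
  finally show ?case using insert.hyps by simp
qed

end


lemma gram_solve:
  fixes x :: "nat \<Rightarrow> 'h::real_inner"
  assumes "finite A"
  shows "(\<forall>c. (\<Sum>j\<in>A. c j *\<^sub>R x j) = 0 \<longrightarrow> (\<forall>j\<in>A. c j = 0)) \<Longrightarrow>
         \<exists>c. \<forall>k\<in>A. inner (x k) (\<Sum>j\<in>A. c j *\<^sub>R x j) = b k"
  using assms
proof (induction A arbitrary: b rule: finite_induct)
  case empty
  then show ?case by simp
next
  case (insert a A)
  have indA: "\<forall>c. (\<Sum>j\<in>A. c j *\<^sub>R x j) = 0 \<longrightarrow> (\<forall>j\<in>A. c j = 0)"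
  proof (intro allI impI)
    fix c assume c0: "(\<Sum>j\<in>A. c j *\<^sub>R x j) = 0"
    have "(\<Sum>j\<in>insert a A. (c(a:=0)) j *\<^sub>R x j) = (\<Sum>j\<in>A. c j *\<^sub>R x j)"
      using insert.hyps by (simp add: sum.insert) (intro sum.cong, auto)
    then have "\<forall>j\<in>insert a A. (c(a:=0)) j = 0" using insert.prems c0 by metis
    then show "\<forall>j\<in>A. c j = 0" using insert.hyps by (metis fun_upd_other insertCI)
  qed
  obtain p where p: "\<forall>k\<in>A. inner (x k) (\<Sum>j\<in>A. p j *\<^sub>R x j) = inner (x k) (x a)"
    using insert.IH[where b="\<lambda>k. inner (x k) (x a)", OF indA] by blast
  obtain c1 where c1: "\<forall>k\<in>A. inner (x k) (\<Sum>j\<in>A. c1 j *\<^sub>R x j) = b k"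
    using insert.IH[where b=b, OF indA] by blast
  define P where "P = (\<Sum>j\<in>A. p j *\<^sub>R x j)"
  define S where "S = (\<Sum>j\<in>A. c1 j *\<^sub>R x j)"
  define q where "q = x a - P"
  have qorth: "inner (x k) q = 0" if "k \<in> A" for k
    using p that by (simp add: q_def P_def inner_diff_right)
  have "q \<noteq> 0"
  proof
    assume "q = 0"
    define c where "c = (\<lambda>j. if j = a then 1 else - p j)"
    have "(\<Sum>j\<in>insert a A. c j *\<^sub>R x j) = x a + (\<Sum>j\<in>A. c j *\<^sub>R x j)"
      using insert.hyps by (simp add: c_def)
    also have "(\<Sum>j\<in>A. c j *\<^sub>R x j) = - P"
      unfolding P_def sum_negf[symmetric] using insert.hyps
      by (intro sum.cong) (auto simp: c_def)
    finally have "(\<Sum>j\<in>insert a A. c j *\<^sub>R x j) = 0" using \<open>q = 0\<close> by (simp add: q_def)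
    then have "c a = 0" using insert.prems by blast
    then show False by (simp add: c_def)
  qed
  have PqO: "inner P q = 0"
    unfolding P_def inner_sum_left using qorth by simp
  have qq: "inner (x a) q = inner q q"
    using PqO by (simp add: q_def inner_diff_left)
  have qpos: "inner q q \<noteq> 0" using \<open>q \<noteq> 0\<close> by simp
  define t where "t = (b a - inner (x a) S) / inner q q"
  define c where "c = (\<lambda>j. if j = a then t else c1 j - t * p j)"
  have sumc: "(\<Sum>j\<in>insert a A. c j *\<^sub>R x j) = S + t *\<^sub>R q"
  proof -
    have "(\<Sum>j\<in>insert a A. c j *\<^sub>R x j) = t *\<^sub>R x a + (\<Sum>j\<in>A. (c1 j - t * p j) *\<^sub>R x j)"
      using insert.hyps by (simp add: c_def) (intro sum.cong, auto)
    also have "(\<Sum>j\<in>A. (c1 j - t * p j) *\<^sub>R x j) = S - t *\<^sub>R P"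
      by (simp add: S_def P_def scaleR_diff_left sum_subtractf scaleR_sum_right)
    finally show ?thesis by (simp add: q_def algebra_simps)
  qed
  show ?case
  proof (intro exI ballI)
    fix k assume k: "k \<in> insert a A"
    show "inner (x k) (\<Sum>j\<in>insert a A. c j *\<^sub>R x j) = b k"
    proof (cases "k = a")
      case True
      then show ?thesis using qpos unfolding sumc
        by (simp add: inner_add_right qq t_def)
    next
      case False
      then have "k \<in> A" using k by simp
      then show ?thesis unfolding sumc using c1 qorth
        by (simp add: inner_add_right S_def)
    qed
  qed
qed



lemma G_fin:
  fixes K :: "(nat \<Rightarrow> real) \<Rightarrow> 'h::real_inner"
  assumes K_bl: "bounded_linear_l2 K" and K_inj: "inj_on K l2"
    and finA: "finite A" and gpos: "\<gamma> > 0"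
  shows "\<exists>C. bij_betw (\<lambda>v. (\<lambda>k. if k \<in> A then \<gamma> * inner (K (unitvec k)) (K v) else v k)) l2 l2 \<and>
     (\<forall>y\<in>l2. l2norm (inv_into l2 (\<lambda>v. (\<lambda>k. if k \<in> A then \<gamma> * inner (K (unitvec k)) (K v) else v k)) y) \<le> C * l2norm y)"
proof -
  define G where "G = (\<lambda>v. (\<lambda>k. if k \<in> A then \<gamma> * inner (K (unitvec k)) (K v) else v k))"
  define x where "x = (\<lambda>j. K (unitvec j))"
  obtain CK where CK: "\<forall>u\<in>l2. norm (K u) \<le> CK * l2norm u"
    using K_bl unfolding bounded_linear_l2_def by blast
  define CK' where "CK' = \<bar>CK\<bar>"
  have CK': "norm (K u) \<le> CK' * l2norm u" if "u \<in> l2" for u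
  proof -
    have "CK * l2norm u \<le> CK' * l2norm u"
      using l2norm_nonneg[OF that] by (simp add: CK'_def mult_right_mono)
    then show ?thesis using CK that by force
  qed
  have CK'0: "CK' \<ge> 0" by (simp add: CK'_def)
  have Ksum: "K z = (\<Sum>j\<in>A. z j *\<^sub>R x j)" if "\<forall>k. k \<notin> A \<longrightarrow> z k = 0" for z
    using K_sum[OF K_bl finA that] by (simp add: x_def)
  have indep: "\<forall>c. (\<Sum>j\<in>A. c j *\<^sub>R x j) = 0 \<longrightarrow> (\<forall>j\<in>A. c j = 0)"
  proof (intro allI impI)
    fix c assume c0: "(\<Sum>j\<in>A. c j *\<^sub>R x j) = 0"
    define z where "z = (\<lambda>k. if k \<in> A then c k else 0)"
    have zs: "\<forall>k. k \<notin> A \<longrightarrow> z k = 0" by (simp add: z_def)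
    have zl2: "z \<in> l2" using zs finA by (intro l2_fin[of A]) auto
    have "(\<Sum>j\<in>A. z j *\<^sub>R x j) = (\<Sum>j\<in>A. c j *\<^sub>R x j)"
      by (rule sum.cong) (auto simp: z_def)
    then have "K z = K (\<lambda>_. 0)" using c0 K_zero[OF K_bl] Ksum[OF zs] by simp
    then have z0: "z = (\<lambda>_. 0)" by (rule inj_onD[OF K_inj _ zl2 zero_l2])
    show "\<forall>j\<in>A. c j = 0"
    proof
      fix j assume "j \<in> A"
      then show "c j = 0" using fun_cong[OF z0, of j] by (simp add: z_def)
    qed
  qed
  have Gl2: "G v \<in> l2" if "v \<in> l2" for v
    by (rule l2_mod[OF that finA]) (simp add: G_def)
  have inj: "inj_on G l2"
  proof (rule inj_onI)
    fix v1 v2 assume v1: "v1 \<in> l2" and v2: "v2 \<in> l2" and eq: "G v1 = G v2"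
    define d where "d = (\<lambda>k. v1 k - v2 k)"
    have off: "v1 k = v2 k" if "k \<notin> A" for k
      using fun_cong[OF eq, of k] that by (simp add: G_def)
    have ds: "\<forall>k. k \<notin> A \<longrightarrow> d k = 0" using off by (simp add: d_def)
    have dl2: "d \<in> l2" using ds finA by (intro l2_fin[of A]) auto
    have "v1 = (\<lambda>k. v2 k + d k)" by (simp add: d_def)
    then have Kv1: "K v1 = K v2 + K d" using K_add[OF K_bl v2 dl2] by simp
    have on: "inner (x k) (K d) = 0" if "k \<in> A" for k
    proof -
      have "\<gamma> * inner (x k) (K v1) = \<gamma> * inner (x k) (K v2)"
        using fun_cong[OF eq, of k] that by (simp add: G_def x_def)
      then have "inner (x k) (K v1) = inner (x k) (K v2)" using gpos by simp
      then show ?thesis using Kv1 by (simp add: inner_add_right)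
    qed
    have "inner (K d) (K d) = (\<Sum>j\<in>A. d j * inner (x j) (K d))"
      by (subst (1) Ksum[OF ds]) (simp add: inner_sum_left x_def)
    also have "\<dots> = 0" using on by simp
    finally have "K d = K (\<lambda>_. 0)" using K_zero[OF K_bl] by simp
    then have d0: "d = (\<lambda>_. 0)" by (rule inj_onD[OF K_inj _ dl2 zero_l2])
    show "v1 = v2"
    proof
      fix k show "v1 k = v2 k" using fun_cong[OF d0, of k] by (simp add: d_def)
    qed
  qed
  have "\<forall>k\<in>A. \<exists>dk. \<forall>i\<in>A. inner (x i) (\<Sum>j\<in>A. dk j *\<^sub>R x j) = (if i = k then 1 else 0)"
  proof
    fix k assume "k \<in> A"
    show "\<exists>dk. \<forall>i\<in>A. inner (x i) (\<Sum>j\<in>A. dk j *\<^sub>R x j) = (if i = k then 1 else 0)"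
      using gram_solve[OF finA indep, where b="\<lambda>i. if i = k then 1 else 0"] by blast
  qed
  then obtain dd where dd: "\<And>k i. k \<in> A \<Longrightarrow> i \<in> A \<Longrightarrow>
      inner (x i) (\<Sum>j\<in>A. dd k j *\<^sub>R x j) = (if i = k then 1 else 0)"
    by (metis (no_types))
  define B where "B = (\<lambda>k. 1 / \<gamma> + norm (x k) * CK')"
  define D where "D = (\<Sum>j\<in>A. \<Sum>k\<in>A. B k * \<bar>dd k j\<bar>)"
  have B0: "B k \<ge> 0" for k using gpos CK'0 by (simp add: B_def)
  have D0: "D \<ge> 0" unfolding D_def using B0 by (intro sum_nonneg) auto
  have sol: "\<exists>v\<in>l2. G v = y \<and> l2norm v \<le> sqrt (1 + D\<^sup>2) * l2norm y" if yl2: "y \<in> l2" for y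
  proof -
    define Ly where "Ly = l2norm y"
    have Ly0: "Ly \<ge> 0" using l2norm_nonneg[OF yl2] by (simp add: Ly_def)
    define y' where "y' = (\<lambda>k. if k \<in> A then 0 else y k)"
    have y'l2: "y' \<in> l2" by (rule l2_mod[OF yl2 finA]) (simp add: y'_def)
    have sy: "summable (\<lambda>k. (y k)\<^sup>2)" using yl2 by (simp add: l2_def)
    have sy': "summable (\<lambda>k. (y' k)\<^sup>2)" using y'l2 by (simp add: l2_def)
    have y'le: "(\<Sum>k. (y' k)\<^sup>2) \<le> (\<Sum>k. (y k)\<^sup>2)"
      by (rule suminf_le[OF _ sy' sy]) (simp add: y'_def)
    have Ly2: "(\<Sum>k. (y k)\<^sup>2) = Ly\<^sup>2"
      unfolding Ly_def l2norm_def using suminf_nonneg[OF sy] by simp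
    have Ly'le: "l2norm y' \<le> Ly"
      unfolding Ly_def l2norm_def using y'le by simp
    define b where "b = (\<lambda>k. y k / \<gamma> - inner (x k) (K y'))"
    have bB: "\<bar>b k\<bar> \<le> B k * Ly" for k
    proof -
      have "\<bar>b k\<bar> \<le> \<bar>y k\<bar> / \<gamma> + \<bar>inner (x k) (K y')\<bar>"
        unfolding b_def using gpos abs_triangle_ineq4[of "y k / \<gamma>" "inner (x k) (K y')"] by simp
      also have "\<bar>y k\<bar> / \<gamma> \<le> Ly / \<gamma>"
        using coord_le_l2norm[OF yl2] gpos by (simp add: Ly_def divide_right_mono)
      also have "\<bar>inner (x k) (K y')\<bar> \<le> norm (x k) * norm (K y')"
        by (rule Cauchy_Schwarz_ineq2)
      also have "\<dots> \<le> norm (x k) * (CK' * Ly)"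
      proof (rule mult_left_mono)
        show "norm (K y') \<le> CK' * Ly"
          using CK'[OF y'l2] mult_left_mono[OF Ly'le CK'0] by linarith
      qed simp
      finally show ?thesis by (simp add: B_def algebra_simps)
    qed
    define c where "c = (\<lambda>j. \<Sum>k\<in>A. b k * dd k j)"
    have csol: "inner (x i) (\<Sum>j\<in>A. c j *\<^sub>R x j) = b i" if "i \<in> A" for i
    proof -
      have "(\<Sum>j\<in>A. c j *\<^sub>R x j) = (\<Sum>k\<in>A. b k *\<^sub>R (\<Sum>j\<in>A. dd k j *\<^sub>R x j))"
        unfolding c_def scaleR_sum_left scaleR_sum_right
        by (subst sum.swap) (simp add: scaleR_scaleR)
      then have "inner (x i) (\<Sum>j\<in>A. c j *\<^sub>R x j) = (\<Sum>k\<in>A. b k * inner (x i) (\<Sum>j\<in>A. dd k j *\<^sub>R x j))"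
        by (simp only: inner_sum_right inner_scaleR_right)
      also have "\<dots> = (\<Sum>k\<in>A. b k * (if i = k then 1 else 0))"
        by (rule sum.cong) (simp_all add: dd[OF _ that])
      also have "\<dots> = b i" using that finA by (simp add: if_distrib cong: if_cong)
      finally show ?thesis .
    qed
    have cabs: "(\<Sum>j\<in>A. \<bar>c j\<bar>) \<le> D * Ly"
    proof -
      have "\<bar>c j\<bar> \<le> (\<Sum>k\<in>A. B k * \<bar>dd k j\<bar>) * Ly" for j
      proof -
        have "\<bar>c j\<bar> \<le> (\<Sum>k\<in>A. \<bar>b k * dd k j\<bar>)" unfolding c_def by (rule sum_abs)
        also have "\<dots> \<le> (\<Sum>k\<in>A. B k * \<bar>dd k j\<bar> * Ly)"
          by (intro sum_mono) (simp add: abs_mult, metis bB abs_ge_zero mult.commute mult.left_commute mult_right_mono)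
        finally show ?thesis by (simp add: sum_distrib_right)
      qed
      then have "(\<Sum>j\<in>A. \<bar>c j\<bar>) \<le> (\<Sum>j\<in>A. (\<Sum>k\<in>A. B k * \<bar>dd k j\<bar>) * Ly)"
        by (intro sum_mono) auto
      then show ?thesis by (simp add: D_def sum_distrib_right)
    qed
    define zz where "zz = (\<lambda>k. if k \<in> A then c k else 0)"
    have zzs: "\<forall>k. k \<notin> A \<longrightarrow> zz k = 0" by (simp add: zz_def)
    have zzl2: "zz \<in> l2" using zzs finA by (intro l2_fin[of A]) auto
    have Kzz: "K zz = (\<Sum>j\<in>A. c j *\<^sub>R x j)"
    proof -
      have "(\<Sum>j\<in>A. zz j *\<^sub>R x j) = (\<Sum>j\<in>A. c j *\<^sub>R x j)"
        by (rule sum.cong) (auto simp: zz_def)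
      then show ?thesis using Ksum[OF zzs] by simp
    qed
    define v where "v = (\<lambda>k. y' k + zz k)"
    have vl2: "v \<in> l2" by (rule l2_mod[OF yl2 finA]) (simp add: v_def y'_def zz_def)
    have Kv: "K v = K y' + K zz" unfolding v_def by (rule K_add[OF K_bl y'l2 zzl2])
    have Gv: "G v = y"
    proof
      fix k show "G v k = y k"
      proof (cases "k \<in> A")
        case True
        then have "G v k = \<gamma> * inner (x k) (K v)" by (simp add: G_def x_def)
        also have "\<dots> = \<gamma> * (inner (x k) (K y') + b k)"
          unfolding Kv Kzz inner_add_right csol[OF True] ..
        finally have "G v k = \<gamma> * (inner (x k) (K y') + b k)" .
        then show ?thesis using gpos by (simp add: b_def)
      next
        case False
        then show ?thesis by (simp add: G_def v_def y'_def zz_def)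
      qed
    qed
    have szz: "summable (\<lambda>k. (zz k)\<^sup>2)" using zzl2 by (simp add: l2_def)
    have "(\<Sum>k. (v k)\<^sup>2) = (\<Sum>k. (y' k)\<^sup>2) + (\<Sum>k. (zz k)\<^sup>2)"
      unfolding suminf_add[OF sy' szz] by (intro arg_cong[where f=suminf]) (auto simp: v_def y'_def zz_def)
    also have "(\<Sum>k. (zz k)\<^sup>2) = (\<Sum>j\<in>A. (c j)\<^sup>2)"
      by (subst suminf_finite[OF finA]) (auto simp: zz_def)
    also have "(\<Sum>j\<in>A. (c j)\<^sup>2) \<le> (\<Sum>j\<in>A. \<bar>c j\<bar>)\<^sup>2"
    proof -
      have "(\<Sum>j\<in>A. (c j)\<^sup>2) \<le> (\<Sum>j\<in>A. \<bar>c j\<bar> * (\<Sum>i\<in>A. \<bar>c i\<bar>))"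
      proof (intro sum_mono)
        fix j assume "j \<in> A"
        then have "\<bar>c j\<bar> \<le> (\<Sum>i\<in>A. \<bar>c i\<bar>)"
          using finA by (intro member_le_sum) auto
        then show "(c j)\<^sup>2 \<le> \<bar>c j\<bar> * (\<Sum>i\<in>A. \<bar>c i\<bar>)"
          by (metis abs_ge_zero mult_left_mono power2_abs power2_eq_square)
      qed
      then show ?thesis by (simp add: power2_eq_square sum_distrib_right)
    qed
    also have "(\<Sum>j\<in>A. \<bar>c j\<bar>)\<^sup>2 \<le> (D * Ly)\<^sup>2"
      using cabs by (intro power_mono) (auto intro: sum_nonneg)
    finally have "(\<Sum>k. (v k)\<^sup>2) \<le> (1 + D\<^sup>2) * Ly\<^sup>2"
      using y'le Ly2 by (simp add: algebra_simps power_mult_distrib)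
    then have "l2norm v \<le> sqrt ((1 + D\<^sup>2) * Ly\<^sup>2)"
      unfolding l2norm_def by simp
    also have "\<dots> = sqrt (1 + D\<^sup>2) * Ly" using Ly0 by (simp add: real_sqrt_mult)
    finally show ?thesis using vl2 Gv by (auto simp: Ly_def)
  qed
  have img: "G ` l2 = l2"
  proof
    show "G ` l2 \<subseteq> l2" using Gl2 by auto
    show "l2 \<subseteq> G ` l2"
    proof
      fix y assume "y \<in> l2"
      then obtain v where "v \<in> l2" "G v = y" using sol by blast
      then show "y \<in> G ` l2" by blast
    qed
  qed
  have bnd: "\<forall>y\<in>l2. l2norm (inv_into l2 G y) \<le> sqrt (1 + D\<^sup>2) * l2norm y"
  proof
    fix y assume "y \<in> l2"
    then obtain v where v: "v \<in> l2" "G v = y" "l2norm v \<le> sqrt (1 + D\<^sup>2) * l2norm y" using sol by blast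
    have "inv_into l2 G y = v" using inv_into_f_f[OF inj v(1)] v(2) by simp
    then show "l2norm (inv_into l2 G y) \<le> sqrt (1 + D\<^sup>2) * l2norm y"
      using v(3) by simp
  qed
  have "bij_betw G l2 l2" using inj img by (simp add: bij_betw_def)
  then show ?thesis using bnd unfolding G_def by blast
qed


theorem corollary3p12:
  fixes K :: "(nat \<Rightarrow> real) \<Rightarrow> 'h::{real_inner, complete_space}"
    and f :: 'h and w :: "nat \<Rightarrow> real" and w0 \<gamma> \<rho> :: real
    and ubar :: "nat \<Rightarrow> real" and k0 :: nat
  assumes K_bl: "bounded_linear_l2 K"
    and K_inj: "inj_on K l2"
    and w0_pos: "w0 > 0" and w_ge: "\<And>k. w k \<ge> w0"
    and gamma_pos: "\<gamma> > 0"
    and ubar_l2: "ubar \<in> l2"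
    and ubar_min: "\<And>u. u \<in> l2 \<Longrightarrow> Psi K f w ubar \<le> Psi K f w u"
    and ubar_unique: "\<And>v. v \<in> l2 \<Longrightarrow> (\<forall>u\<in>l2. Psi K f w v \<le> Psi K f w u) \<Longrightarrow> v = ubar"
    and rho_pos: "\<rho> > 0"
    and active_bound: "\<And>u. u \<in> l2 \<Longrightarrow> l2norm (\<lambda>k. u k - ubar k) < \<rho> \<Longrightarrow>
                          activeset K f w \<gamma> u \<subseteq> {..<k0}"
  shows "\<exists>C. \<forall>u\<in>l2. l2norm (\<lambda>k. u k - ubar k) < \<rho> \<longrightarrow>
            bij_betw (Gop K f w \<gamma> u) l2 l2 \<and>
            (\<forall>y\<in>l2. l2norm (inv_into l2 (Gop K f w \<gamma> u) y) \<le> C * l2norm y)"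
proof -
  define GA where "GA = (\<lambda>A v. (\<lambda>k. if k \<in> A then \<gamma> * inner (K (unitvec k)) (K v) else v k))"
  have "\<forall>A\<in>Pow {..<k0}. \<exists>C. bij_betw (GA A) l2 l2 \<and>
     (\<forall>y\<in>l2. l2norm (inv_into l2 (GA A) y) \<le> C * l2norm y)"
  proof
    fix A assume "A \<in> Pow {..<k0}"
    then have "finite A" by (auto intro: finite_subset)
    from G_fin[OF K_bl K_inj this gamma_pos] show "\<exists>C. bij_betw (GA A) l2 l2 \<and>
     (\<forall>y\<in>l2. l2norm (inv_into l2 (GA A) y) \<le> C * l2norm y)" unfolding GA_def .
  qed
  then obtain Cf where Cf: "\<And>A. A \<in> Pow {..<k0} \<Longrightarrow> bij_betw (GA A) l2 l2 \<and>
     (\<forall>y\<in>l2. l2norm (inv_into l2 (GA A) y) \<le> Cf A * l2norm y)"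
    by metis
  define C where "C = (\<Sum>A\<in>Pow {..<k0}. \<bar>Cf A\<bar>)"
  show ?thesis
  proof (intro exI ballI impI)
    fix u assume ul2: "u \<in> l2" and ball: "l2norm (\<lambda>k. u k - ubar k) < \<rho>"
    define A where "A = activeset K f w \<gamma> u"
    have AP: "A \<in> Pow {..<k0}" using active_bound[OF ul2 ball] by (simp add: A_def)
    have Geq: "Gop K f w \<gamma> u = GA A"
      by (intro ext) (simp add: Gop_def GA_def A_def Kadj_def)
    have CfC: "Cf A \<le> C"
    proof -
      have "\<bar>Cf A\<bar> \<le> C" unfolding C_def using AP by (intro member_le_sum) auto
      then show ?thesis by linarith
    qed
    show "bij_betw (Gop K f w \<gamma> u) l2 l2 \<and>
      (\<forall>y\<in>l2. l2norm (inv_into l2 (Gop K f w \<gamma> u) y) \<le> C * l2norm y)"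
    proof (intro conjI ballI)
      show "bij_betw (Gop K f w \<gamma> u) l2 l2" using Cf[OF AP] Geq by simp
      fix y assume yl2: "y \<in> l2"
      have "l2norm (inv_into l2 (GA A) y) \<le> Cf A * l2norm y" using Cf[OF AP] yl2 by blast
      also have "\<dots> \<le> C * l2norm y" using CfC l2norm_nonneg[OF yl2] by (rule mult_right_mono)
      finally show "l2norm (inv_into l2 (Gop K f w \<gamma> u) y) \<le> C * l2norm y" using Geq by simp
    qed
  qed
qed

end
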